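(* Let $q=p^m$ be a prime power with $p$ prime, let $3\le h\le k$ be integers, and $$D_3=\Bigl\{(x_1,\ldots,x_k)\in\mathbb{F}_q^k\setminus\{0\}:\prod_{i=1}^h x_i\prod_{1\le i<j\le h}(x_i+x_j)=0\Bigr\}.$$ Let $$\Gamma(h,q)=\sum_{s=1}^{\min(h,(q-1)/2)}\frac{(q-1)(q-3)\cdots(q-2s+1)}{s!}\,\mathcal{S}(h,s),$$ where $\mathcal{S}(x,y)$ is the number of surjective functions from a set of size $x$ onto a set of size $y\le x$. Then the length $\#D_3$ of the code $\mathrm{C}_{D_3}$ equals $q^{k-h}\bigl(q^h-(q-1)(q-2)\cdots(q-h)\bigr)-1$ if $p=2$ and $h\le q+1$; $q^k-1$ if $p=2$ and $h>q+1$; and $q^{k-h}\bigl(q^h-\Gamma(h,q)\bigr)-1$ if $p>2$.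
   Context: For a finite set $D=\{P_1,\ldots,P_n\}\subseteq\mathbb{F}_q^k$, $\mathrm{C}_D=\{(f(P_1),\ldots,f(P_n)):f:\mathbb{F}_q^k\to\mathbb{F}_q\text{ linear}\}$, a code of length $n=\#D$. *)

theory Defs
  imports Complex_Main "HOL-Library.FuncSet" "HOL-Library.Cardinality" "HOL-Computational_Algebra.Primes"
begin

text \<open>Vectors of \<open>F_q^k\<close>: functions \<open>nat \<Rightarrow> 'a\<close> with coordinates \<open>x 0, ..., x (k-1)\<close>
  and zero outside \<open>{0..<k}\<close>.\<close>
definition vecs :: "nat \<Rightarrow> (nat \<Rightarrow> 'a::zero) set" where
  "vecs k = {x. \<forall>i. k \<le> i \<longrightarrow> x i = 0}"

text \<open>The defining set \<open>D_3\<close> (coordinates \<open>x_1..x_h\<close> are \<open>x 0 .. x (h-1)\<close>).\<close>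
definition D3 :: "nat \<Rightarrow> nat \<Rightarrow> (nat \<Rightarrow> 'a::field) set" where
  "D3 h k = {x \<in> vecs k. x \<noteq> (\<lambda>_. 0) \<and>
      (\<Prod>i<h. x i) * (\<Prod>i<h. \<Prod>j\<in>{i<..<h}. x i + x j) = 0}"

definition surj_count :: "nat \<Rightarrow> nat \<Rightarrow> nat" where
  "surj_count x y = card {f \<in> {0..<x} \<rightarrow>\<^sub>E {0..<y}. f ` {0..<x} = {0..<y}}"

definition Gamma_hq :: "nat \<Rightarrow> nat \<Rightarrow> rat" where
  "Gamma_hq h q = (\<Sum>s = 1..min h ((q - 1) div 2).
      (\<Prod>j = 1..s. (of_nat q - 2 * of_nat j + 1)) / of_nat (fact s) * of_nat (surj_count h s))"

end

theory Submission
  imports Defs "HOL-Number_Theory.Residues"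
begin

lemma card_vecs_restrict:
  fixes P :: "(nat \<Rightarrow> 'a::{finite,zero}) \<Rightarrow> bool"
  assumes "h \<le> k"
  shows "card {x \<in> (vecs k :: (nat \<Rightarrow> 'a) set). P (restrict x {0..<h})} =
         card {f \<in> {0..<h} \<rightarrow>\<^sub>E (UNIV::'a set). P f} * CARD('a) ^ (k - h)"
proof -
  let ?A = "{x \<in> (vecs k :: (nat \<Rightarrow> 'a) set). P (restrict x {0..<h})}"
  let ?B = "{f \<in> {0..<h} \<rightarrow>\<^sub>E (UNIV::'a set). P f} \<times> ({h..<k} \<rightarrow>\<^sub>E (UNIV::'a set))"
  have "bij_betw (\<lambda>x. (restrict x {0..<h}, restrict x {h..<k})) ?A ?B"
  proof (rule bij_betw_byWitness[where f'="\<lambda>(f,g) i. if i<h then f i else if i<k then g i else 0"])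
    show "\<forall>a\<in>?A. (\<lambda>(f,g) i. if i<h then f i else if i<k then g i else 0) (restrict a {0..<h}, restrict a {h..<k}) = a"
      by (auto simp: vecs_def fun_eq_iff)
    show "\<forall>a'\<in>?B. (\<lambda>x. (restrict x {0..<h}, restrict x {h..<k})) ((\<lambda>(f,g) i. if i<h then f i else if i<k then g i else 0) a') = a'"
      using assms by (auto simp: fun_eq_iff PiE_def extensional_def restrict_def)
    show "(\<lambda>x. (restrict x {0..<h}, restrict x {h..<k})) ` ?A \<subseteq> ?B"
      by auto
    show "(\<lambda>(f,g) i. if i<h then f i else if i<k then g i else 0) ` ?B \<subseteq> ?A"
    proof -
      have key: "(\<lambda>i. if i<h then f i else if i<k then g i else 0) \<in> ?A"
        if f: "f \<in> {0..<h} \<rightarrow>\<^sub>E (UNIV::'a set)" "P f" and g: "g \<in> {h..<k} \<rightarrow>\<^sub>E (UNIV::'a set)" for f g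
      proof -
        have "restrict (\<lambda>i. if i<h then f i else if i<k then g i else 0) {0..<h} = f"
          using f by (auto simp: fun_eq_iff PiE_def extensional_def restrict_def)
        then show ?thesis
          using f assms by (auto simp: vecs_def)
      qed
      show ?thesis using key by force
    qed
  qed
  then have "card ?A = card ?B" by (rule bij_betw_same_card)
  also have "\<dots> = card {f \<in> {0..<h} \<rightarrow>\<^sub>E (UNIV::'a set). P f} * CARD('a) ^ (k - h)"
    by (simp add: card_cartesian_product card_funcsetE)
  finally show ?thesis .
qed

lemma card_vecs: "card (vecs k :: (nat \<Rightarrow> 'a::{finite,zero}) set) = CARD('a) ^ k"
  using card_vecs_restrict[of 0 k "\<lambda>_. True"] by simp

lemma two_zero_iff:
  assumes "prime p" "m \<ge> 1" "CARD('a::{finite,field}) = p ^ m"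
  shows "((1::'a) + 1 = 0) \<longleftrightarrow> p = 2"
proof -
  have pos: "CHAR('a) > 0" by (rule finite_imp_CHAR_pos) simp
  then have pc: "prime CHAR('a)" by (rule prime_CHAR_semidom)
  have "CHAR('a) dvd p ^ m" using CHAR_dvd_CARD[where 'a='a] assms(3) by simp
  then have "CHAR('a) dvd p" using pc prime_dvd_power by blast
  then have cp: "CHAR('a) = p" using pc assms(1) primes_dvd_imp_eq by blast
  have "((1::'a) + 1 = 0) \<longleftrightarrow> of_nat 2 = (0::'a)" by simp
  also have "\<dots> \<longleftrightarrow> CHAR('a) dvd 2" by (rule of_nat_eq_0_iff_char_dvd)
  also have "\<dots> \<longleftrightarrow> p = 2"
  proof
    assume "CHAR('a) dvd 2"
    then have "p \<le> 2" using cp dvd_imp_le by fastforce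
    moreover have "p > 1" using assms(1) prime_gt_1_nat by blast
    ultimately show "p = 2" by linarith
  qed (use cp in simp)
  finally show ?thesis .
qed

definition Pg :: "nat \<Rightarrow> (nat \<Rightarrow> 'a::field) \<Rightarrow> bool" where
  "Pg h f = ((\<forall>i<h. f i \<noteq> 0) \<and> (\<forall>i<h. \<forall>j<h. i \<noteq> j \<longrightarrow> f i + f j \<noteq> 0))"

lemma Pg_restrict: "Pg h (restrict x {0..<h}) = Pg h x"
  by (simp add: Pg_def)

lemma prod_ne0_iff:
  "((\<Prod>i<h. x i) * (\<Prod>i<h. \<Prod>j\<in>{i<..<h}. x i + x j) \<noteq> (0::'a::field)) = Pg h x"
proof -
  have "((\<Prod>i<h. x i) * (\<Prod>i<h. \<Prod>j\<in>{i<..<h}. x i + x j) \<noteq> (0::'a::field)) =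
     ((\<forall>i<h. x i \<noteq> 0) \<and> (\<forall>i<h. \<forall>j. i < j \<and> j < h \<longrightarrow> x i + x j \<noteq> 0))"
    by (auto simp: prod_zero_iff)
  also have "\<dots> = Pg h x"
    unfolding Pg_def
  proof (intro conj_cong refl iffI allI impI)
    fix i j assume A: "\<forall>i<h. \<forall>j. i < j \<and> j < h \<longrightarrow> x i + x j \<noteq> 0" and ij: "i < h" "j < h" "i \<noteq> j"
    show "x i + x j \<noteq> 0"
    proof (cases "i < j")
      case True then show ?thesis using A ij by blast
    next
      case False then have "j < i" using ij by simp
      then show ?thesis using A ij by (metis add.commute)
    qed
  qed auto
  finally show ?thesis .
qed

lemma D3_decomp:
  assumes "1 \<le> h" "h \<le> k"
  shows "card (D3 h k :: (nat \<Rightarrow> 'a::{finite,field}) set) + 1 +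
     card {f \<in> {0..<h} \<rightarrow>\<^sub>E (UNIV::'a set). Pg h f} * CARD('a) ^ (k - h) = CARD('a) ^ k"
proof -
  let ?G = "{x \<in> (vecs k :: (nat \<Rightarrow> 'a) set). Pg h (restrict x {0..<h})}"
  have e: "(vecs k :: (nat \<Rightarrow> 'a) set) = (D3 h k \<union> {\<lambda>_. 0}) \<union> ?G"
    by (auto simp: D3_def vecs_def Pg_restrict prod_ne0_iff[symmetric])
  have fin: "finite (vecs k :: (nat \<Rightarrow> 'a) set)"
    by (rule card_ge_0_finite) (simp add: card_vecs)
  have sub: "D3 h k \<subseteq> (vecs k :: (nat \<Rightarrow> 'a) set)" by (auto simp: D3_def)
  have d1: "D3 h k \<inter> {\<lambda>_. 0} = {}" by (auto simp: D3_def)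
  have z: "\<not> Pg h (\<lambda>_. 0::'a)" using assms unfolding Pg_def by (metis less_le_trans zero_less_one)
  have d2: "(D3 h k \<union> {\<lambda>_. 0}) \<inter> ?G = {}"
    using z by (auto simp: D3_def Pg_restrict prod_ne0_iff[symmetric])
  have "CARD('a) ^ k = card (vecs k :: (nat \<Rightarrow> 'a) set)" by (simp add: card_vecs)
  also have "\<dots> = card ((D3 h k \<union> {\<lambda>_. 0}) \<union> ?G)"
    by (rule arg_cong[where f=card, OF e])
  also have "\<dots> = card (D3 h k \<union> {\<lambda>_. 0::'a}) + card ?G"
  proof (rule Finite_Set.card_Un_disjoint)
    show "finite (D3 h k \<union> {\<lambda>_. 0::'a})" using finite_subset[OF sub fin] by simp
    show "finite ?G" using fin by simp
  qed (rule d2)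
  also have "card (D3 h k \<union> {\<lambda>_. 0::'a}) = card (D3 h k :: (nat \<Rightarrow> 'a) set) + 1"
  proof -
    have "(\<lambda>_. 0::'a) \<notin> D3 h k" using d1 by auto
    then show ?thesis using finite_subset[OF sub fin] by (metis Un_insert_right sup_bot.right_neutral Finite_Set.card_insert_disjoint Suc_eq_plus1)
  qed
  also have "card ?G = card {f \<in> {0..<h} \<rightarrow>\<^sub>E (UNIV::'a set). Pg h f} * CARD('a) ^ (k - h)"
    by (rule card_vecs_restrict[OF assms(2)])
  finally show ?thesis by linarith
qed

lemma card_inj_PiE:
  assumes "finite B"
  shows "card {f \<in> {0..<h} \<rightarrow>\<^sub>E B. inj_on f {0..<h}} = (\<Prod>i<h. card B - i)"
proof (induction h)
  case 0
  then show ?case by simp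
next
  case (Suc h)
  let ?S = "\<lambda>h. {f \<in> {0..<h} \<rightarrow>\<^sub>E B. inj_on f {0..<h}}"
  have fin: "finite (?S h)"
    by (rule finite_subset[of _ "{0..<h} \<rightarrow>\<^sub>E B"]) (auto intro: finite_PiE assms)
  have "bij_betw (\<lambda>f. (restrict f {0..<h}, f h)) (?S (Suc h)) (Sigma (?S h) (\<lambda>g. B - g ` {0..<h}))"
  proof (rule bij_betw_byWitness[where f'="\<lambda>(g,b). g(h:=b)"])
    show "\<forall>a\<in>?S (Suc h). (\<lambda>(g,b). g(h:=b)) (restrict a {0..<h}, a h) = a"
      by (auto simp: fun_eq_iff PiE_def extensional_def restrict_def)
    show "\<forall>a'\<in>Sigma (?S h) (\<lambda>g. B - g ` {0..<h}). (\<lambda>f. (restrict f {0..<h}, f h)) ((\<lambda>(g,b). g(h:=b)) a') = a'"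
      by (auto simp: fun_eq_iff PiE_def extensional_def restrict_def)
    show "(\<lambda>f. (restrict f {0..<h}, f h)) ` ?S (Suc h) \<subseteq> Sigma (?S h) (\<lambda>g. B - g ` {0..<h})"
    proof
      fix y assume "y \<in> (\<lambda>f. (restrict f {0..<h}, f h)) ` ?S (Suc h)"
      then obtain f where f: "f \<in> {0..<Suc h} \<rightarrow>\<^sub>E B" "inj_on f {0..<Suc h}"
        and y: "y = (restrict f {0..<h}, f h)" by auto
      have "restrict f {0..<h} \<in> ?S h" using f by (auto simp: inj_on_def)
      moreover have "f h \<notin> f ` {0..<h}" using inj_on_image_mem_iff[OF f(2), of h "{0..<h}"] by auto
      then have "f h \<in> B - restrict f {0..<h} ` {0..<h}" using f by auto
      ultimately show "y \<in> Sigma (?S h) (\<lambda>g. B - g ` {0..<h})" using y by auto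
    qed
    show "(\<lambda>(g,b). g(h:=b)) ` Sigma (?S h) (\<lambda>g. B - g ` {0..<h}) \<subseteq> ?S (Suc h)"
    proof
      fix y assume "y \<in> (\<lambda>(g,b). g(h:=b)) ` Sigma (?S h) (\<lambda>g. B - g ` {0..<h})"
      then obtain g b where g: "g \<in> {0..<h} \<rightarrow>\<^sub>E B" "inj_on g {0..<h}" "b \<in> B" "b \<notin> g ` {0..<h}"
        and y: "y = g(h:=b)" by auto
      have e: "{0..<Suc h} = insert h {0..<h}" by auto
      have "g(h:=b) \<in> {0..<Suc h} \<rightarrow>\<^sub>E B" unfolding e by (rule PiE_fun_upd) (use g in auto)
      moreover have "inj_on (g(h:=b)) {0..<Suc h}"
      proof -
        have i1: "inj_on (g(h:=b)) {0..<h}" using g(2) by (simp add: inj_on_def)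
        have i2: "(g(h:=b)) ` {0..<h} = g ` {0..<h}" by auto
        show ?thesis unfolding e inj_on_insert using i1 i2 g(4) by simp
      qed
      ultimately show "y \<in> ?S (Suc h)" using y by auto
    qed
  qed
  then have "card (?S (Suc h)) = card (Sigma (?S h) (\<lambda>g. B - g ` {0..<h}))" by (rule bij_betw_same_card)
  also have "\<dots> = (\<Sum>g\<in>?S h. card (B - g ` {0..<h}))"
    using fin assms by (simp add: card_SigmaI)
  also have "\<dots> = (\<Sum>g\<in>?S h. card B - h)"
  proof (rule sum.cong[OF refl])
    fix g assume g: "g \<in> ?S h"
    then have "g ` {0..<h} \<subseteq> B" by auto
    moreover have "card (g ` {0..<h}) = h" using g by (simp add: card_image)
    ultimately show "card (B - g ` {0..<h}) = card B - h"
      using assms by (metis card_Diff_subset finite_imageI finite_atLeastLessThan)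
  qed
  also have "\<dots> = card (?S h) * (card B - h)" by simp
  also have "\<dots> = (\<Prod>i<Suc h. card B - i)" using Suc.IH by simp
  finally show ?case .
qed

lemma Pg_char2:
  assumes "(1::'a::field) + 1 = 0"
  shows "{f \<in> {0..<h} \<rightarrow>\<^sub>E (UNIV::'a set). Pg h f} = {f \<in> {0..<h} \<rightarrow>\<^sub>E (UNIV - {0}). inj_on f {0..<h}}"
proof -
  have ab: "(a + b = 0) = (a = b)" for a b :: 'a
  proof -
    have "a + a = (1 + 1) * a" by (simp only: distrib_right mult_1)
    also have "\<dots> = 0" by (simp only: assms mult_zero_left)
    finally have "a = - a" by (simp only: add_eq_0_iff)
    then have "- a = a" by simp
    then show ?thesis by (simp only: add_eq_0_iff) (use \<open>- a = a\<close> in auto)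
  qed
  have pg: "Pg h f = ((\<forall>i<h. f i \<noteq> 0) \<and> inj_on f {0..<h})" for f :: "nat \<Rightarrow> 'a"
    unfolding Pg_def ab inj_on_def Ball_def atLeastLessThan_iff by (simp only: le0 simp_thms) blast
  show ?thesis
  proof (rule Set.set_eqI)
    fix f :: "nat \<Rightarrow> 'a"
    show "f \<in> {f \<in> {0..<h} \<rightarrow>\<^sub>E UNIV. Pg h f} \<longleftrightarrow> f \<in> {f \<in> {0..<h} \<rightarrow>\<^sub>E (UNIV - {0}). inj_on f {0..<h}}"
      unfolding mem_Collect_eq PiE_iff pg by auto
  qed
qed

definition adm :: "('b \<Rightarrow> 'b) \<Rightarrow> 'b set \<Rightarrow> bool" where
  "adm \<nu> T = (\<forall>x\<in>T. \<nu> x \<notin> T)"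

definition Cs :: "('b \<Rightarrow> 'b) \<Rightarrow> 'b set \<Rightarrow> nat \<Rightarrow> 'b set set" where
  "Cs \<nu> X s = {T. T \<subseteq> X \<and> adm \<nu> T \<and> card T = s}"

definition invol :: "('b \<Rightarrow> 'b) \<Rightarrow> 'b set \<Rightarrow> bool" where
  "invol \<nu> X = (\<forall>x\<in>X. \<nu> x \<in> X \<and> \<nu> x \<noteq> x \<and> \<nu> (\<nu> x) = x)"

lemma Cs_finite: "finite X \<Longrightarrow> finite (Cs \<nu> X s)"
  by (rule finite_subset[of _ "Pow X"]) (auto simp: Cs_def)

lemma invol_remove:
  assumes "invol \<nu> X" "c \<in> X"
  shows "invol \<nu> (X - {c, \<nu> c})"
  unfolding invol_def
proof
  fix x assume x: "x \<in> X - {c, \<nu> c}"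
  have i: "\<nu> x \<in> X" "\<nu> x \<noteq> x" "\<nu> (\<nu> x) = x" "\<nu> (\<nu> c) = c"
    using assms x unfolding invol_def by auto
  have "\<nu> x \<noteq> c" using i x by auto
  moreover have "\<nu> x \<noteq> \<nu> c" using i x by (metis DiffE insertCI)
  ultimately show "\<nu> x \<in> X - {c, \<nu> c} \<and> \<nu> x \<noteq> x \<and> \<nu> (\<nu> x) = x" using i by auto
qed

lemma Cs_with:
  assumes fin: "finite X" and inv: "invol \<nu> X" and c: "c \<in> X"
  shows "card {T \<in> Cs \<nu> X (Suc t). c \<in> T} = card (Cs \<nu> (X - {c, \<nu> c}) t)"
proof -
  have nc: "\<nu> c \<noteq> c" "\<nu> c \<in> X" using inv c by (auto simp: invol_def)
  have "bij_betw (\<lambda>T. T - {c}) {T \<in> Cs \<nu> X (Suc t). c \<in> T} (Cs \<nu> (X - {c, \<nu> c}) t)"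
  proof (rule bij_betw_byWitness[where f'="insert c"])
    show "\<forall>T\<in>{T \<in> Cs \<nu> X (Suc t). c \<in> T}. insert c (T - {c}) = T" by auto
    show "\<forall>T\<in>Cs \<nu> (X - {c, \<nu> c}) t. insert c T - {c} = T" by (auto simp: Cs_def)
    show "(\<lambda>T. T - {c}) ` {T \<in> Cs \<nu> X (Suc t). c \<in> T} \<subseteq> Cs \<nu> (X - {c, \<nu> c}) t"
    proof
      fix U assume "U \<in> (\<lambda>T. T - {c}) ` {T \<in> Cs \<nu> X (Suc t). c \<in> T}"
      then obtain T where T: "T \<subseteq> X" "adm \<nu> T" "card T = Suc t" "c \<in> T" and U: "U = T - {c}"
        by (auto simp: Cs_def)
      have "\<nu> c \<notin> T" using T(2,4) by (auto simp: adm_def)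
      then have "U \<subseteq> X - {c, \<nu> c}" using T(1) U by auto
      moreover have "adm \<nu> U" using T(2) U by (auto simp: adm_def)
      moreover have "card U = t" using T U finite_subset[OF T(1) fin] by simp
      ultimately show "U \<in> Cs \<nu> (X - {c, \<nu> c}) t" by (simp add: Cs_def)
    qed
    show "insert c ` Cs \<nu> (X - {c, \<nu> c}) t \<subseteq> {T \<in> Cs \<nu> X (Suc t). c \<in> T}"
    proof
      fix U assume "U \<in> insert c ` Cs \<nu> (X - {c, \<nu> c}) t"
      then obtain T where T: "T \<subseteq> X - {c, \<nu> c}" "adm \<nu> T" "card T = t" and U: "U = insert c T"
        by (auto simp: Cs_def)
      have "U \<subseteq> X" using T(1) U c by auto
      moreover have "adm \<nu> U"
        unfolding adm_def
      proof
        fix x assume x: "x \<in> U"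
        show "\<nu> x \<notin> U"
        proof (cases "x = c")
          case True then show ?thesis using nc T(1) U by auto
        next
          case False
          then have xT: "x \<in> T" using x U by auto
          have "\<nu> x \<notin> T" using T(2) xT by (auto simp: adm_def)
          moreover have "\<nu> x \<noteq> c"
          proof
            assume "\<nu> x = c"
            then have "x = \<nu> c" using inv xT T(1) unfolding invol_def by (metis Diff_iff subsetD)
            then show False using xT T(1) by auto
          qed
          ultimately show ?thesis using U by auto
        qed
      qed
      moreover have "card U = Suc t"
      proof -
        have "finite T" using T(1) fin by (meson Diff_subset finite_subset)
        moreover have "c \<notin> T" using T(1) by auto
        ultimately show ?thesis using U T(3) by simp
      qed
      ultimately show "U \<in> {T \<in> Cs \<nu> X (Suc t). c \<in> T}" using U by (simp add: Cs_def)
    qed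
  qed
  then show ?thesis by (rule bij_betw_same_card)
qed

lemma Cs_count:
  assumes "finite X" "invol \<nu> X"
  shows "card (Cs \<nu> X s) = (card X div 2 choose s) * 2 ^ s \<and> even (card X)"
  using assms
proof (induction "card X" arbitrary: X s rule: less_induct)
  case less
  show ?case
  proof (cases "X = {}")
    case True
    then have "Cs \<nu> X s = (if s = 0 then {{}} else {})" by (auto simp: Cs_def adm_def)
    then show ?thesis using True by simp
  next
    case False
    then obtain a where a: "a \<in> X" by auto
    define b where "b = \<nu> a"
    have ab: "b \<in> X" "b \<noteq> a" "\<nu> b = a" using less.prems a unfolding invol_def b_def by auto
    define X' where "X' = X - {a, b}"
    have X'b: "X - {b, \<nu> b} = X'" using ab unfolding X'_def by auto
    have finX': "finite X'" using less.prems unfolding X'_def by auto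
    have cX': "card X' = card X - 2" using a ab less.prems(1) unfolding X'_def by (simp add: card_Diff_subset)
    have cX2: "card X \<ge> 2"
    proof -
      have "card {a, b} \<le> card X" using a ab less.prems(1) by (intro card_mono) auto
      then show ?thesis using ab(2) by simp
    qed
    have invX': "invol \<nu> X'" unfolding X'_def b_def by (rule invol_remove[OF less.prems(2) a])
    have IH: "card (Cs \<nu> X' s') = (card X' div 2 choose s') * 2 ^ s' \<and> even (card X')" for s'
      using less.hyps[of X' s'] cX' cX2 finX' invX' by simp
    let ?M = "card X' div 2"
    have M: "card X div 2 = Suc ?M" "even (card X)" using IH[of 0] cX' cX2 by auto
    show ?thesis
    proof (cases s)
      case 0
      have e: "T = {}" if "T \<subseteq> X" "card T = 0" for T
        using that less.prems(1) by (meson card_0_eq finite_subset)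
      have "Cs \<nu> X s = {{}}" using 0 e by (auto simp: Cs_def adm_def)
      then show ?thesis using 0 M by simp
    next
      case (Suc t)
      let ?A0 = "{T \<in> Cs \<nu> X (Suc t). a \<notin> T \<and> b \<notin> T}"
      let ?Aa = "{T \<in> Cs \<nu> X (Suc t). a \<in> T}"
      let ?Ab = "{T \<in> Cs \<nu> X (Suc t). b \<in> T}"
      have split: "Cs \<nu> X (Suc t) = ?A0 \<union> (?Aa \<union> ?Ab)" by auto
      have fin: "finite (Cs \<nu> X (Suc t))" using less.prems(1) by (rule Cs_finite)
      have disj1: "?Aa \<inter> ?Ab = {}" using ab unfolding Cs_def adm_def b_def by auto
      have A0: "?A0 = Cs \<nu> X' (Suc t)" unfolding X'_def Cs_def by auto
      have Aa: "card ?Aa = card (Cs \<nu> X' t)"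
        using Cs_with[OF less.prems a, of t] unfolding X'_def b_def .
      have Ab: "card ?Ab = card (Cs \<nu> X' t)"
        using Cs_with[OF less.prems ab(1), of t] X'b by simp
      have "card (Cs \<nu> X (Suc t)) = card ?A0 + (card ?Aa + card ?Ab)"
        apply (subst split)
        apply (subst card_Un_disjoint)
           apply (use fin in auto)[3]
        apply (subst card_Un_disjoint)
           apply (use fin disj1 in auto)
        done
      also have "\<dots> = (?M choose Suc t) * 2 ^ Suc t + 2 * ((?M choose t) * 2 ^ t)"
        using IH A0 Aa Ab by simp
      also have "\<dots> = (Suc ?M choose Suc t) * 2 ^ Suc t"
        by (simp only: binomial_Suc_Suc add_mult_distrib power_Suc)
      finally show ?thesis using Suc M by simp
    qed
  qed
qed

lemma surj_inv:
  assumes "finite U"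
  shows "card {f \<in> {0..<h} \<rightarrow>\<^sub>E U. f ` {0..<h} = U} = surj_count h (card U)"
proof -
  let ?s = "card U"
  obtain \<beta> where \<beta>: "bij_betw \<beta> {0..<?s} U" using ex_bij_betw_nat_finite[OF assms] by blast
  have inj: "inj_on \<beta> {0..<?s}" and im: "\<beta> ` {0..<?s} = U" using \<beta> by (auto simp: bij_betw_def)
  let ?i = "the_inv_into {0..<?s} \<beta>"
  let ?A = "{f \<in> {0..<h} \<rightarrow>\<^sub>E {0..<?s}. f ` {0..<h} = {0..<?s}}"
  let ?B = "{f \<in> {0..<h} \<rightarrow>\<^sub>E U. f ` {0..<h} = U}"
  have iU: "?i u \<in> {0..<?s}" if "u \<in> U" for u
    using the_inv_into_into[OF inj, of u "{0..<?s}"] that im by auto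
  have bi: "\<beta> (?i u) = u" if "u \<in> U" for u
    using f_the_inv_into_f[OF inj, of u] that im by auto
  have ib: "?i (\<beta> x) = x" if "x \<in> {0..<?s}" for x
    using the_inv_into_f_f[OF inj that] .
  have "bij_betw (\<lambda>g. restrict (\<beta> \<circ> g) {0..<h}) ?A ?B"
  proof (rule bij_betw_byWitness[where f'="\<lambda>f. restrict (?i \<circ> f) {0..<h}"])
    show "\<forall>g\<in>?A. restrict (?i \<circ> restrict (\<beta> \<circ> g) {0..<h}) {0..<h} = g"
    proof
      fix g assume g: "g \<in> ?A"
      show "restrict (?i \<circ> restrict (\<beta> \<circ> g) {0..<h}) {0..<h} = g"
      proof
        fix x show "restrict (?i \<circ> restrict (\<beta> \<circ> g) {0..<h}) {0..<h} x = g x"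
          using g ib by (cases "x < h") (auto simp: PiE_def extensional_def Pi_def)
      qed
    qed
    show "\<forall>f\<in>?B. restrict (\<beta> \<circ> restrict (?i \<circ> f) {0..<h}) {0..<h} = f"
    proof
      fix f assume f: "f \<in> ?B"
      show "restrict (\<beta> \<circ> restrict (?i \<circ> f) {0..<h}) {0..<h} = f"
      proof
        fix x show "restrict (\<beta> \<circ> restrict (?i \<circ> f) {0..<h}) {0..<h} x = f x"
          using f bi by (cases "x < h") (auto simp: PiE_def extensional_def Pi_def)
      qed
    qed
    show "(\<lambda>g. restrict (\<beta> \<circ> g) {0..<h}) ` ?A \<subseteq> ?B"
    proof
      fix y assume "y \<in> (\<lambda>g. restrict (\<beta> \<circ> g) {0..<h}) ` ?A"
      then obtain g where g: "g \<in> {0..<h} \<rightarrow>\<^sub>E {0..<?s}" "g ` {0..<h} = {0..<?s}"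
        and y: "y = restrict (\<beta> \<circ> g) {0..<h}" by blast
      have "y \<in> {0..<h} \<rightarrow>\<^sub>E \<beta> ` {0..<?s}" using g(1) y by (auto simp: PiE_iff)
      then have "y \<in> {0..<h} \<rightarrow>\<^sub>E U" using im by simp
      moreover have "y ` {0..<h} = \<beta> ` (g ` {0..<h})" using y by auto
      ultimately show "y \<in> ?B" using g(2) im by simp
    qed
    show "(\<lambda>f. restrict (?i \<circ> f) {0..<h}) ` ?B \<subseteq> ?A"
    proof
      fix y assume "y \<in> (\<lambda>f. restrict (?i \<circ> f) {0..<h}) ` ?B"
      then obtain f where f: "f \<in> {0..<h} \<rightarrow>\<^sub>E U" "f ` {0..<h} = U"
        and y: "y = restrict (?i \<circ> f) {0..<h}" by blast
      have fx: "\<forall>x\<in>{0..<h}. f x \<in> U" using f(1) by (simp add: PiE_iff)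
      have "y \<in> {0..<h} \<rightarrow>\<^sub>E {0..<?s}" unfolding y PiE_iff using fx iU by simp
      moreover have "y ` {0..<h} = ?i ` (f ` {0..<h})" using y by auto
      moreover have "?i ` U = {0..<?s}" using the_inv_into_onto[OF inj] im by simp
      ultimately show "y \<in> ?A" using f(2) by simp
    qed
  qed
  then have "card ?A = card ?B" by (rule bij_betw_same_card)
  then show ?thesis unfolding surj_count_def by simp
qed

lemma fib:
  fixes h :: nat
  assumes "finite X"
  shows "card {f \<in> {0..<h} \<rightarrow>\<^sub>E X. P (f ` {0..<h})} =
    (\<Sum>U\<in>{U. U \<subseteq> X \<and> P U}. card {f \<in> {0..<h} \<rightarrow>\<^sub>E U. f ` {0..<h} = U})"
proof -
  let ?I = "{U. U \<subseteq> X \<and> P U}"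
  let ?F = "\<lambda>U. {f \<in> {0..<h} \<rightarrow>\<^sub>E U. f ` {0..<h} = U}"
  have finI: "finite ?I" by (rule finite_subset[of _ "Pow X"]) (use assms in auto)
  have eq: "{f \<in> {0..<h} \<rightarrow>\<^sub>E X. P (f ` {0..<h})} = (\<Union>U\<in>?I. ?F U)"
  proof (rule Set.set_eqI)
    fix f
    show "f \<in> {f \<in> {0..<h} \<rightarrow>\<^sub>E X. P (f ` {0..<h})} \<longleftrightarrow> f \<in> (\<Union>U\<in>?I. ?F U)"
    proof
      assume f: "f \<in> {f \<in> {0..<h} \<rightarrow>\<^sub>E X. P (f ` {0..<h})}"
      then have "f ` {0..<h} \<in> ?I" "f \<in> ?F (f ` {0..<h})" by (auto simp: PiE_iff)
      then show "f \<in> (\<Union>U\<in>?I. ?F U)" by blast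
    next
      assume "f \<in> (\<Union>U\<in>?I. ?F U)"
      then obtain U where U: "U \<subseteq> X" "P U" "f \<in> {0..<h} \<rightarrow>\<^sub>E U" "f ` {0..<h} = U" by blast
      then show "f \<in> {f \<in> {0..<h} \<rightarrow>\<^sub>E X. P (f ` {0..<h})}" by (auto simp: PiE_iff)
    qed
  qed
  have "card (\<Union>U\<in>?I. ?F U) = (\<Sum>U\<in>?I. card (?F U))"
  proof (rule card_UN_disjoint[OF finI])
    show "\<forall>U\<in>?I. finite (?F U)"
    proof
      fix U assume "U \<in> ?I"
      then have "finite U" using assms finite_subset by blast
      then have "finite ({0..<h} \<rightarrow>\<^sub>E U)" by (intro finite_PiE finite_atLeastLessThan)
      then show "finite (?F U)" by simp
    qed
    show "\<forall>U\<in>?I. \<forall>V\<in>?I. U \<noteq> V \<longrightarrow> ?F U \<inter> ?F V = {}" by blast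
  qed
  then show ?thesis using eq by simp
qed

lemma Pg_odd:
  assumes "(1::'a::field) + 1 \<noteq> 0"
  shows "{f \<in> {0..<h} \<rightarrow>\<^sub>E (UNIV::'a set). Pg h f} =
         {f \<in> {0..<h} \<rightarrow>\<^sub>E (UNIV - {0}). adm uminus (f ` {0..<h})}"
proof (rule Set.set_eqI)
  fix f :: "nat \<Rightarrow> 'a"
  have aa: "a + a \<noteq> 0" if "a \<noteq> 0" for a :: 'a
  proof
    assume "a + a = 0"
    then have "(1 + 1) * a = 0" by (simp only: distrib_right mult_1)
    then show False using assms that by simp
  qed
  have neg: "(x + y = 0) = (- x = y)" for x y :: 'a by (auto simp: add_eq_0_iff)
  have "Pg h f = ((\<forall>i<h. f i \<noteq> 0) \<and> adm uminus (f ` {0..<h}))"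
  proof
    assume P: "Pg h f"
    have "adm uminus (f ` {0..<h})"
      unfolding adm_def
    proof
      fix x assume "x \<in> f ` {0..<h}"
      then obtain i where i: "i < h" "x = f i" by auto
      show "- x \<notin> f ` {0..<h}"
      proof
        assume "- x \<in> f ` {0..<h}"
        then obtain j where j: "j < h" "- x = f j" by auto
        show False
        proof (cases "i = j")
          case True then show ?thesis using aa[of "f i"] P i j unfolding Pg_def neg by auto
        next
          case False then show ?thesis using P i j unfolding Pg_def neg by auto
        qed
      qed
    qed
    then show "(\<forall>i<h. f i \<noteq> 0) \<and> adm uminus (f ` {0..<h})" using P unfolding Pg_def by simp
  next
    assume A: "(\<forall>i<h. f i \<noteq> 0) \<and> adm uminus (f ` {0..<h})"
    show "Pg h f" unfolding Pg_def
    proof (intro conjI allI impI)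
      fix i assume "i < h" then show "f i \<noteq> 0" using A by simp
    next
      fix i j assume ij: "i < h" "j < h" "i \<noteq> j"
      show "f i + f j \<noteq> 0"
      proof
        assume "f i + f j = 0"
        then have "- f i = f j" by (simp add: neg)
        then show False using A ij unfolding adm_def by (metis atLeastLessThan_iff imageI zero_le)
      qed
    qed
  qed
  then show "f \<in> {f \<in> {0..<h} \<rightarrow>\<^sub>E (UNIV::'a set). Pg h f} \<longleftrightarrow>
         f \<in> {f \<in> {0..<h} \<rightarrow>\<^sub>E (UNIV - {0}). adm uminus (f ` {0..<h})}"
    by (auto simp: PiE_iff)
qed

lemma surj_count_0: "0 < h \<Longrightarrow> surj_count h 0 = 0"
  unfolding surj_count_def by (subst PiE_empty_range[of 0]) auto

lemma surj_count_big: "h < s \<Longrightarrow> surj_count h s = 0"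
proof -
  assume hs: "h < s"
  have E: "{f \<in> {0..<h} \<rightarrow>\<^sub>E {0..<s}. f ` {0..<h} = {0..<s}} = {}"
  proof (rule ccontr)
    assume "\<not> ?thesis"
    then obtain f where "f ` {0..<h} = {0..<s}" by blast
    then have "card {0..<s} \<le> card {0..<h}" by (metis card_image_le finite_atLeastLessThan)
    then show False using hs by simp
  qed
  show ?thesis unfolding surj_count_def E by simp
qed

lemma prod_odd: "(\<Prod>j = 1..s. (of_nat (2*M+1) - 2 * of_nat j + 1 :: rat)) = 2 ^ s * (\<Prod>i = 0..<s. of_nat M - of_nat i)"
proof (induction s)
  case 0 then show ?case by simp
next
  case (Suc s)
  have "(\<Prod>j = 1..Suc s. (of_nat (2*M+1) - 2 * of_nat j + 1 :: rat)) =
        (\<Prod>j = 1..s. (of_nat (2*M+1) - 2 * of_nat j + 1 :: rat)) * (of_nat (2*M+1) - 2 * of_nat (Suc s) + 1)"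
    by (simp add: atLeastAtMostSuc_conv mult.commute)
  also have "\<dots> = 2 ^ s * (\<Prod>i = 0..<s. of_nat M - of_nat i) * (2 * (of_nat M - of_nat s))"
    using Suc.IH by (simp add: algebra_simps)
  also have "\<dots> = 2 ^ Suc s * (\<Prod>i = 0..<Suc s. of_nat M - of_nat i)"
    by (simp add: algebra_simps)
  finally show ?case .
qed

lemma term_odd: "(\<Prod>j = 1..s. (of_nat (2*M+1) - 2 * of_nat j + 1 :: rat)) / of_nat (fact s) = of_nat ((M choose s) * 2 ^ s)"
proof -
  have "(of_nat (M choose s) :: rat) * fact s = (\<Prod>i = 0..<s. of_nat M - of_nat i)"
    by (simp add: binomial_gbinomial gbinomial_mult_fact')
  then show ?thesis unfolding prod_odd by (simp add: field_simps)
qed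

lemma Gamma_eq:
  assumes "0 < h"
  shows "Gamma_hq h (2*M+1) = of_nat (\<Sum>s = 0..M. (M choose s) * 2 ^ s * surj_count h s)"
proof -
  have "Gamma_hq h (2*M+1) = (\<Sum>s = 1..min h M. of_nat ((M choose s) * 2 ^ s * surj_count h s))"
  proof -
    have m: "(2*M+1-1) div 2 = M" by simp
    show ?thesis unfolding Gamma_hq_def m
    proof (rule sum.cong[OF refl])
      fix s
      show "(\<Prod>j = 1..s. (of_nat (2*M+1) - 2 * of_nat j + 1 :: rat)) / of_nat (fact s) * of_nat (surj_count h s) =
            of_nat ((M choose s) * 2 ^ s * surj_count h s)"
        by (subst term_odd) (simp only: of_nat_mult)
    qed
  qed
  also have "\<dots> = (\<Sum>s = 0..M. of_nat ((M choose s) * 2 ^ s * surj_count h s))"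
  proof (rule sum.mono_neutral_left)
    show "\<forall>i\<in>{0..M} - {1..min h M}. of_nat ((M choose i) * 2 ^ i * surj_count h i) = (0::rat)"
    proof
      fix i assume "i \<in> {0..M} - {1..min h M}"
      then have "i = 0 \<or> h < i" by auto
      then have "surj_count h i = 0" using assms surj_count_0 surj_count_big by auto
      then show "of_nat ((M choose i) * 2 ^ i * surj_count h i) = (0::rat)" by simp
    qed
  qed auto
  finally show ?thesis by simp
qed

lemma falling_zero:
  assumes "1 \<le> q" "q \<le> h"
  shows "(\<Prod>i = 1..h. of_nat q - of_nat i :: rat) = 0"
  unfolding prod_zero_iff[OF finite_atLeastAtMost]
  by (rule bexI[of _ q]) (use assms in auto)

lemma falling_rat:
  assumes "1 \<le> q"
  shows "(of_nat (\<Prod>i<h. q - 1 - i) :: rat) = (\<Prod>i = 1..h. of_nat q - of_nat i)"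
proof (induction h)
  case 0 then show ?case by simp
next
  case (Suc h)
  show ?case
  proof (cases "Suc h \<le> q")
    case True
    then have "(of_nat (q - 1 - h) :: rat) = of_nat q - of_nat (Suc h)" by (simp add: of_nat_diff)
    then show ?thesis using Suc.IH by (simp add: atLeastAtMostSuc_conv mult.commute)
  next
    case False
    have "(\<Prod>i<h. q - 1 - i) = 0" unfolding prod_zero_iff[OF finite_lessThan]
      by (rule bexI[of _ "q - 1"]) (use False assms in auto)
    have "(\<Prod>i = 1..h. of_nat q - of_nat i :: rat) = 0" by (rule falling_zero) (use False assms in auto)
    moreover have "(\<Prod>i<Suc h. q - 1 - i) = 0" unfolding prod_zero_iff[OF finite_lessThan]
      by (rule bexI[of _ "q - 1"]) (use False assms in auto)
    ultimately show ?thesis by (simp add: atLeastAtMostSuc_conv)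
  qed
qed

lemma odd_count:
  assumes two: "(1::'a::{finite,field}) + 1 \<noteq> 0" and h: "0 < h"
  shows "card {f \<in> {0..<h} \<rightarrow>\<^sub>E (UNIV::'a set). Pg h f} =
    (\<Sum>s = 0..(CARD('a) - 1) div 2. (((CARD('a) - 1) div 2) choose s) * 2 ^ s * surj_count h s)"
proof -
  define X where "X = (UNIV - {0::'a})"
  define M where "M = card X div 2"
  have cX: "card X = CARD('a) - 1" unfolding X_def by (simp add: card_Diff_subset)
  have finX: "finite X" by simp
  have aa: "a + a \<noteq> 0" if "a \<noteq> 0" for a :: 'a
  proof
    assume "a + a = 0"
    then have "(1 + 1) * a = 0" by (simp only: distrib_right mult_1)
    then show False using two that by simp
  qed
  have inv: "invol uminus X" unfolding invol_def X_def
  proof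
    fix x :: 'a assume x: "x \<in> UNIV - {0}"
    have "- x \<noteq> x"
    proof
      assume "- x = x"
      then have "x + x = 0" by (metis add.right_inverse)
      then show False using aa x by auto
    qed
    then show "- x \<in> UNIV - {0} \<and> - x \<noteq> x \<and> - (- x) = x" using x by auto
  qed
  let ?S = "{U. U \<subseteq> X \<and> adm uminus U}"
  have finS: "finite ?S" by (rule finite_subset[of _ "Pow X"]) (use finX in auto)
  have Cc: "card (Cs uminus X s) = (M choose s) * 2 ^ s" for s
    using Cs_count[OF finX inv] unfolding M_def by blast
  have "card {f \<in> {0..<h} \<rightarrow>\<^sub>E (UNIV::'a set). Pg h f} =
        card {f \<in> {0..<h} \<rightarrow>\<^sub>E X. adm uminus (f ` {0..<h})}"
    unfolding X_def using Pg_odd[OF two] by simp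
  also have "\<dots> = (\<Sum>U\<in>?S. card {f \<in> {0..<h} \<rightarrow>\<^sub>E U. f ` {0..<h} = U})"
    by (rule fib[OF finX])
  also have "\<dots> = (\<Sum>U\<in>?S. surj_count h (card U))"
  proof (rule sum.cong[OF refl])
    fix U assume "U \<in> ?S"
    then have "finite U" using finX finite_subset by blast
    then show "card {f \<in> {0..<h} \<rightarrow>\<^sub>E U. f ` {0..<h} = U} = surj_count h (card U)" by (rule surj_inv)
  qed
  also have "\<dots> = (\<Sum>s\<in>card ` ?S. (\<Sum>U\<in>{U \<in> ?S. card U = s}. surj_count h (card U)))"
    by (rule sum.image_gen[OF finS])
  also have "\<dots> = (\<Sum>s\<in>card ` ?S. card (Cs uminus X s) * surj_count h s)"
  proof (rule sum.cong[OF refl])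
    fix s
    have e: "{U \<in> ?S. card U = s} = Cs uminus X s" unfolding Cs_def by auto
    have "(\<Sum>U\<in>{U \<in> ?S. card U = s}. surj_count h (card U)) = (\<Sum>U\<in>{U \<in> ?S. card U = s}. surj_count h s)"
      by (rule sum.cong) auto
    then show "(\<Sum>U\<in>{U \<in> ?S. card U = s}. surj_count h (card U)) = card (Cs uminus X s) * surj_count h s"
      unfolding e by simp
  qed
  also have "\<dots> = (\<Sum>s\<in>{0..M}. card (Cs uminus X s) * surj_count h s)"
  proof (rule sum.mono_neutral_left)
    show "card ` ?S \<subseteq> {0..M}"
    proof
      fix s assume "s \<in> card ` ?S"
      then obtain U where U: "U \<in> ?S" "s = card U" by blast
      then have "U \<in> Cs uminus X s" unfolding Cs_def by auto
      then have "Cs uminus X s \<noteq> {}" by blast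
      then have "card (Cs uminus X s) \<noteq> 0" using Cs_finite[OF finX] by simp
      then have "(M choose s) \<noteq> 0" using Cc by simp
      then show "s \<in> {0..M}" by auto
    qed
    show "\<forall>i\<in>{0..M} - card ` ?S. card (Cs uminus X i) * surj_count h i = 0"
    proof
      fix i assume i: "i \<in> {0..M} - card ` ?S"
      have "Cs uminus X i = {}"
      proof (rule ccontr)
        assume "Cs uminus X i \<noteq> {}"
        then obtain U where "U \<in> Cs uminus X i" by blast
        then have "U \<in> ?S" "card U = i" unfolding Cs_def by auto
        then show False using i by blast
      qed
      then show "card (Cs uminus X i) * surj_count h i = 0" by simp
    qed
  qed simp
  also have "\<dots> = (\<Sum>s = 0..M. (M choose s) * 2 ^ s * surj_count h s)"
    using Cc by simp
  finally show ?thesis unfolding M_def cX .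
qed

theorem proposition4p1:
  fixes p m h k :: nat
    and F :: "'a::{finite,field} itself"
  assumes "prime p" and "m \<ge> 1"
    and "CARD('a) = p ^ m"
    and "3 \<le> h" and "h \<le> k"
  shows "(of_nat (card (D3 h k :: (nat \<Rightarrow> 'a) set)) :: rat) =
     (let q = CARD('a) in
      if p = 2 \<and> h \<le> q + 1 then
        of_nat q ^ (k - h) * (of_nat q ^ h - (\<Prod>i = 1..h. (of_nat q - of_nat i))) - 1
      else if p = 2 then of_nat q ^ k - 1
      else of_nat q ^ (k - h) * (of_nat q ^ h - Gamma_hq h q) - 1)"
proof -
  define q where "q = CARD('a)"
  define N where "N = card {f \<in> {0..<h} \<rightarrow>\<^sub>E (UNIV::'a set). Pg h f}"
  have q1: "1 \<le> q" unfolding q_def by (simp add: Suc_le_eq)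
  have h1: "1 \<le> h" using assms(4) by simp
  have dec: "card (D3 h k :: (nat \<Rightarrow> 'a) set) + 1 + N * q ^ (k - h) = q ^ k"
    unfolding N_def q_def by (rule D3_decomp[OF h1 assms(5)])
  then have "(of_nat (card (D3 h k :: (nat \<Rightarrow> 'a) set) + 1 + N * q ^ (k - h)) :: rat) = of_nat (q ^ k)"
    by simp
  then have D: "(of_nat (card (D3 h k :: (nat \<Rightarrow> 'a) set)) :: rat) = of_nat q ^ k - 1 - of_nat N * of_nat q ^ (k - h)"
    by simp
  have qk: "(of_nat q :: rat) ^ (k - h) * of_nat q ^ h = of_nat q ^ k"
    using assms(5) by (simp add: power_add[symmetric])
  show ?thesis
  proof (cases "p = 2")
    case True
    have two: "(1::'a) + 1 = 0" using two_zero_iff[OF assms(1-3)] True by simp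
    have "N = card {f \<in> {0..<h} \<rightarrow>\<^sub>E (UNIV - {0::'a}). inj_on f {0..<h}}"
      unfolding N_def using Pg_char2[OF two] by simp
    also have "\<dots> = (\<Prod>i<h. card (UNIV - {0::'a}) - i)" by (rule card_inj_PiE) simp
    also have "card (UNIV - {0::'a}) = q - 1" unfolding q_def by (simp add: card_Diff_subset)
    finally have "N = (\<Prod>i<h. q - 1 - i)" .
    then have NR: "(of_nat N :: rat) = (\<Prod>i = 1..h. of_nat q - of_nat i)" using falling_rat[OF q1] by simp
    show ?thesis
    proof (cases "h \<le> q + 1")
      case True
      have "(of_nat q :: rat) ^ (k - h) * (of_nat q ^ h - (\<Prod>i = 1..h. (of_nat q - of_nat i))) - 1 =
            of_nat q ^ (k - h) * of_nat q ^ h - of_nat N * of_nat q ^ (k - h) - 1"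
        unfolding NR by (simp add: algebra_simps)
      also have "\<dots> = of_nat (card (D3 h k :: (nat \<Rightarrow> 'a) set))" unfolding qk D by simp
      finally show ?thesis using True \<open>p = 2\<close> unfolding q_def Let_def by simp
    next
      case False
      have "(of_nat N :: rat) = 0" unfolding NR by (rule falling_zero) (use q1 False in auto)
      then show ?thesis using False \<open>p = 2\<close> D unfolding q_def Let_def by simp
    qed
  next
    case False
    have two: "(1::'a) + 1 \<noteq> 0" using two_zero_iff[OF assms(1-3)] False by simp
    have "odd p" using prime_odd_nat[OF assms(1)] False prime_ge_2_nat[OF assms(1)] by simp
    then have oq: "odd q" unfolding q_def assms(3) by simp
    define M where "M = (q - 1) div 2"
    have qM: "q = 2 * M + 1" using oq unfolding M_def by presburger
    have "N = (\<Sum>s = 0..M. (M choose s) * 2 ^ s * surj_count h s)"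
      unfolding N_def M_def q_def using odd_count[OF two] h1 by simp
    then have G: "Gamma_hq h q = of_nat N" unfolding qM using Gamma_eq h1 by simp
    have "(of_nat q :: rat) ^ (k - h) * (of_nat q ^ h - Gamma_hq h q) - 1 =
          of_nat q ^ (k - h) * of_nat q ^ h - of_nat N * of_nat q ^ (k - h) - 1"
      unfolding G by (simp add: algebra_simps)
    also have "\<dots> = of_nat (card (D3 h k :: (nat \<Rightarrow> 'a) set))" unfolding qk D by simp
    finally show ?thesis using False unfolding q_def Let_def by simp
  qed
qed

end
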